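(* Let $\Omega=\{1,\dots,m\}^{\mathbb{N}}$, let $\mathcal{M}$ be the set of Borel probabilities on $\Omega$ with the Monge–Kantorovich metric $d_{MK}$, and let $R:\Omega\times\Omega\to\Omega$ be continuous and $s$-Lipschitz in the second variable, i.e. $d_\Omega(R(x,y),R(x,y'))\le s\,d_\Omega(y,y')$ for all $x,y,y'\in\Omega$. Let $*$ be the convolution associated to $R$. Then for each fixed $\eta\in\mathcal{M}$, the map $\mu\mapsto\eta*\mu$ is $s$-Lipschitz with respect to $d_{MK}$: $d_{MK}(\eta*\mu,\eta*\mu')\le s\,d_{MK}(\mu,\mu')$ for all $\mu,\mu'\in\mathcal{M}$.
   Context: $d_\Omega(\alpha,\beta)=2^{-k}$ with $k=\min\{i:\alpha_i\neq\beta_i\}$ (and $0$ if $\alpha=\beta$); $d_{MK}(\mu,\nu)=\sup\{\int f\,d\mu-\int f\,d\nu : f \text{ 1-Lipschitz}\}$. The convolution associated to $R$ is defined for $\nu,\mu\in\mathcal{M}$ by $(\nu*\mu)(E)=(\nu\times\mu)(R^{-1}(E))$, i.e. $\int_\Omega f\,d(\nu*\mu)=\int\int f(R(x,y))\,d\nu(x)\,d\mu(y)$ for all continuous $f:\Omega\to\mathbb{R}$. *)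

theory Defs
  imports "HOL-Probability.Probability"
begin

text \<open>The sequence space Omega = {1,...,m}^N (sequences indexed by nat, starting at 0).\<close>
definition Omega :: "nat \<Rightarrow> (nat \<Rightarrow> nat) set" where
  "Omega m = {\<alpha>. \<forall>i. \<alpha> i \<in> {1..m}}"

definition dOmega :: "(nat \<Rightarrow> nat) \<Rightarrow> (nat \<Rightarrow> nat) \<Rightarrow> real" where
  "dOmega \<alpha> \<beta> = (if \<alpha> = \<beta> then 0 else (1/2) ^ (LEAST i. \<alpha> i \<noteq> \<beta> i))"

definition Omega_open :: "nat \<Rightarrow> (nat \<Rightarrow> nat) set set" where
  "Omega_open m = {U. U \<subseteq> Omega m \<and>
     (\<forall>x\<in>U. \<exists>e>0. \<forall>y\<in>Omega m. dOmega x y < e \<longrightarrow> y \<in> U)}"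

definition OmegaM :: "nat \<Rightarrow> (nat \<Rightarrow> nat) measure" where
  "OmegaM m = sigma (Omega m) (Omega_open m)"

definition PM :: "nat \<Rightarrow> (nat \<Rightarrow> nat) measure set" where
  "PM m = {\<mu>. prob_space \<mu> \<and> sets \<mu> = sets (OmegaM m)}"

definition Lip1 :: "nat \<Rightarrow> ((nat \<Rightarrow> nat) \<Rightarrow> real) set" where
  "Lip1 m = {f. \<forall>x\<in>Omega m. \<forall>y\<in>Omega m. \<bar>f x - f y\<bar> \<le> dOmega x y}"

definition dMK :: "nat \<Rightarrow> (nat \<Rightarrow> nat) measure \<Rightarrow> (nat \<Rightarrow> nat) measure \<Rightarrow> real" where
  "dMK m \<mu> \<nu> = Sup {(\<integral>x. f x \<partial>\<mu>) - (\<integral>x. f x \<partial>\<nu>) | f. f \<in> Lip1 m}"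

definition conv :: "nat \<Rightarrow> ((nat \<Rightarrow> nat) \<Rightarrow> (nat \<Rightarrow> nat) \<Rightarrow> (nat \<Rightarrow> nat))
    \<Rightarrow> (nat \<Rightarrow> nat) measure \<Rightarrow> (nat \<Rightarrow> nat) measure \<Rightarrow> (nat \<Rightarrow> nat) measure" where
  "conv m R \<nu> \<mu> = distr (\<nu> \<Otimes>\<^sub>M \<mu>) (OmegaM m) (\<lambda>(x, y). R x y)"

end

theory Submission
  imports Defs
begin

lemma dOmega_nonneg: "0 \<le> dOmega x y"
  by (simp add: dOmega_def)

lemma dOmega_le1: "dOmega x y \<le> 1"
  by (simp add: dOmega_def power_le_one)

lemma dOmega_small:
  assumes "dOmega x y < (1/2)^n" and "i < n" shows "x i = y i"
proof (rule ccontr)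
  assume ne: "x i \<noteq> y i"
  then have xy: "x \<noteq> y" by auto
  let ?k = "LEAST i. x i \<noteq> y i"
  have "?k \<le> i" using ne by (rule Least_le)
  then have "((1::real)/2)^n < (1/2)^?k" using assms(2)
    by (intro power_strict_decreasing) auto
  with assms(1) xy show False by (simp add: dOmega_def)
qed

lemma dOmega_agree:
  assumes "\<forall>i<n. x i = y i" shows "dOmega x y \<le> (1/2)^n"
proof (cases "x = y")
  case True then show ?thesis by (simp add: dOmega_def)
next
  case False
  then obtain j where j: "x j \<noteq> y j" by auto
  let ?k = "LEAST i. x i \<noteq> y i"
  have "x ?k \<noteq> y ?k" using j by (rule LeastI)
  then have "n \<le> ?k" using assms by (meson not_le)
  then have "((1::real)/2)^?k \<le> (1/2)^n" by (intro power_decreasing) auto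
  with False show ?thesis by (simp add: dOmega_def)
qed

lemma Omega_open_sub: "Omega_open m \<subseteq> Pow (Omega m)"
  by (auto simp: Omega_open_def)

lemma space_OmegaM[simp]: "space (OmegaM m) = Omega m"
  unfolding OmegaM_def using Omega_open_sub by (rule space_measure_of)

lemma sets_OmegaM_open: "U \<in> Omega_open m \<Longrightarrow> U \<in> sets (OmegaM m)"
  unfolding OmegaM_def using Omega_open_sub by auto

lemma cont_measurable:
  fixes f :: "(nat \<Rightarrow> nat) \<Rightarrow> real"
  assumes "\<forall>x\<in>Omega m. \<forall>e>0. \<exists>\<delta>>0. \<forall>y\<in>Omega m. dOmega x y < \<delta> \<longrightarrow> \<bar>f x - f y\<bar> < e"
  shows "f \<in> borel_measurable (OmegaM m)"
proof (rule borel_measurableI)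
  fix S :: "real set" assume S: "open S"
  have "f -` S \<inter> Omega m \<in> Omega_open m"
    unfolding Omega_open_def
  proof (safe)
    fix x assume x: "x \<in> Omega m" "f x \<in> S"
    obtain e where e: "e > 0" "\<forall>z. dist z (f x) < e \<longrightarrow> z \<in> S"
      using S x(2) open_dist by metis
    obtain d where d: "d > 0" "\<forall>y\<in>Omega m. dOmega x y < d \<longrightarrow> \<bar>f x - f y\<bar> < e"
      using assms x(1) e(1) by blast
    show "\<exists>e>0. \<forall>y\<in>Omega m. dOmega x y < e \<longrightarrow> y \<in> f -` S \<inter> Omega m"
      using d e by (auto simp: dist_real_def abs_minus_commute)
  qed
  then show "f -` S \<inter> space (OmegaM m) \<in> sets (OmegaM m)"
    by (simp add: sets_OmegaM_open)
qed

lemma Lip1_measurable: "f \<in> Lip1 m \<Longrightarrow> f \<in> borel_measurable (OmegaM m)"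
  apply (rule cont_measurable)
  apply (auto simp: Lip1_def)
  by (meson le_less_trans)

lemma Lip1_bound: "f \<in> Lip1 m \<Longrightarrow> x \<in> Omega m \<Longrightarrow> \<bar>f x\<bar> \<le> \<bar>f (\<lambda>_. 1)\<bar> + 1"
proof -
  assume f: "f \<in> Lip1 m" and x: "x \<in> Omega m"
  then have "(\<lambda>_. 1) \<in> Omega m" by (auto simp: Omega_def)
  with f x have "\<bar>f x - f (\<lambda>_. 1)\<bar> \<le> dOmega x (\<lambda>_. 1)" by (auto simp: Lip1_def)
  also have "\<dots> \<le> 1" by (rule dOmega_le1)
  finally show ?thesis by linarith
qed

definition cylL :: "nat \<Rightarrow> nat list \<Rightarrow> (nat \<Rightarrow> nat) set" where
  "cylL m xs = {y \<in> Omega m. \<forall>i<length xs. y i = xs ! i}"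

lemma cylL_sets: "cylL m xs \<in> sets (OmegaM m)"
proof (rule sets_OmegaM_open)
  show "cylL m xs \<in> Omega_open m"
    unfolding Omega_open_def
  proof safe
    fix x assume x: "x \<in> cylL m xs"
    show "\<exists>e>0. \<forall>y\<in>Omega m. dOmega x y < e \<longrightarrow> y \<in> cylL m xs"
    proof (intro exI[of _ "(1/2)^length xs"] conjI ballI impI)
      fix y assume "y \<in> Omega m" "dOmega x y < (1/2)^length xs"
      then show "y \<in> cylL m xs" using x dOmega_small[of x y "length xs"]
        by (auto simp: cylL_def)
    qed simp
  qed (auto simp: cylL_def)
qed


lemma R_measurable:
  fixes R :: "(nat \<Rightarrow> nat) \<Rightarrow> (nat \<Rightarrow> nat) \<Rightarrow> (nat \<Rightarrow> nat)"
  assumes R_into: "\<forall>x\<in>Omega m. \<forall>y\<in>Omega m. R x y \<in> Omega m"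
    and R_cont: "\<forall>x\<in>Omega m. \<forall>y\<in>Omega m. \<forall>e>0. \<exists>\<delta>>0. \<forall>x'\<in>Omega m. \<forall>y'\<in>Omega m.
                   dOmega x x' < \<delta> \<and> dOmega y y' < \<delta> \<longrightarrow> dOmega (R x y) (R x' y') < e"
  shows "(\<lambda>(x, y). R x y) \<in> measurable (OmegaM m \<Otimes>\<^sub>M OmegaM m) (OmegaM m)"
proof -
  let ?M = "OmegaM m"
  have "(\<lambda>(x, y). R x y) \<in> measurable (?M \<Otimes>\<^sub>M ?M) (measure_of (Omega m) (Omega_open m) (\<lambda>_. 0))"
  proof (rule measurable_measure_of[OF Omega_open_sub])
    show "(\<lambda>(x, y). R x y) \<in> space (?M \<Otimes>\<^sub>M ?M) \<rightarrow> Omega m"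
      using R_into by (auto simp: space_pair_measure)
  next
    fix U assume U: "U \<in> Omega_open m"
    let ?W = "(\<lambda>(x, y). R x y) -` U \<inter> space (?M \<Otimes>\<^sub>M ?M)"
    define I where "I = {(xs, ys). cylL m xs \<times> cylL m ys \<subseteq> ?W}"
    have eq: "?W = (\<Union>p\<in>I. cylL m (fst p) \<times> cylL m (snd p))"
    proof (rule equalityI)
      show "(\<Union>p\<in>I. cylL m (fst p) \<times> cylL m (snd p)) \<subseteq> ?W" by (auto simp: I_def)
    next
      show "?W \<subseteq> (\<Union>p\<in>I. cylL m (fst p) \<times> cylL m (snd p))"
      proof (rule subsetI)
        fix z assume z: "z \<in> ?W"
        obtain x y where xy: "z = (x, y)" by (cases z)
        have x: "x \<in> Omega m" and y: "y \<in> Omega m" and RU: "R x y \<in> U"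
          using z xy by (auto simp: space_pair_measure)
        obtain e where e: "e > 0" "\<forall>w\<in>Omega m. dOmega (R x y) w < e \<longrightarrow> w \<in> U"
          using U RU unfolding Omega_open_def by blast
        obtain d where d: "d > 0" "\<forall>x'\<in>Omega m. \<forall>y'\<in>Omega m.
                   dOmega x x' < d \<and> dOmega y y' < d \<longrightarrow> dOmega (R x y) (R x' y') < e"
          using R_cont x y e(1) by blast
        obtain n where n: "((1::real)/2)^n < d"
          using real_arch_pow_inv[OF d(1), of "1/2"] by auto
        let ?xs = "map x [0..<n]" and ?ys = "map y [0..<n]"
        have sub0: "(x', y') \<in> ?W" if x': "x' \<in> cylL m ?xs" and y': "y' \<in> cylL m ?ys" for x' y'
        proof -
          have x'O: "x' \<in> Omega m" and y'O: "y' \<in> Omega m" using x' y' by (auto simp: cylL_def)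
          have "dOmega x x' \<le> (1/2)^n" using x' by (intro dOmega_agree) (auto simp: cylL_def)
          moreover have "dOmega y y' \<le> (1/2)^n" using y' by (intro dOmega_agree) (auto simp: cylL_def)
          ultimately have "dOmega x x' < d" "dOmega y y' < d" using n by linarith+
          then have "dOmega (R x y) (R x' y') < e" using d(2) x'O y'O by blast
          then have "R x' y' \<in> U" using e(2) R_into x'O y'O by blast
          then show "(x', y') \<in> ?W" using x'O y'O by (auto simp: space_pair_measure)
        qed
        have sub: "cylL m ?xs \<times> cylL m ?ys \<subseteq> ?W" using sub0 by blast
        moreover have "z \<in> cylL m ?xs \<times> cylL m ?ys" using x y xy by (auto simp: cylL_def)
        ultimately show "z \<in> (\<Union>p\<in>I. cylL m (fst p) \<times> cylL m (snd p))"
          by (intro UN_I[of "(?xs, ?ys)"]) (auto simp: I_def)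
      qed
    qed
    show "?W \<in> sets (?M \<Otimes>\<^sub>M ?M)"
      unfolding eq
    proof (rule sets.countable_UN')
      show "countable I" by (rule countable_subset[OF subset_UNIV]) simp
      show "(\<lambda>p. cylL m (fst p) \<times> cylL m (snd p)) ` I \<subseteq> sets (?M \<Otimes>\<^sub>M ?M)"
        using cylL_sets by (auto intro!: pair_measureI)
    qed
  qed
  moreover have "measurable (?M \<Otimes>\<^sub>M ?M) (measure_of (Omega m) (Omega_open m) (\<lambda>_. 0))
     = measurable (?M \<Otimes>\<^sub>M ?M) ?M"
    by (rule measurable_cong_sets) (simp_all add: OmegaM_def)
  ultimately show ?thesis by simp
qed


lemma PM_D:
  assumes "\<nu> \<in> PM m"
  shows "prob_space \<nu>" "sets \<nu> = sets (OmegaM m)" "space \<nu> = Omega m"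
proof -
  show "prob_space \<nu>" "sets \<nu> = sets (OmegaM m)" using assms by (auto simp: PM_def)
  then show "space \<nu> = Omega m" using sets_eq_imp_space_eq[of \<nu> "OmegaM m"] by simp
qed

lemma meas_PM:
  assumes "\<nu> \<in> PM m" "f \<in> borel_measurable (OmegaM m)"
  shows "f \<in> borel_measurable \<nu>"
  by (subst measurable_cong_sets[OF PM_D(2)[OF assms(1)] refl]) (rule assms(2))

lemma integrable_PM:
  fixes f :: "(nat \<Rightarrow> nat) \<Rightarrow> real"
  assumes "\<nu> \<in> PM m" "f \<in> borel_measurable (OmegaM m)" "\<And>x. x \<in> Omega m \<Longrightarrow> \<bar>f x\<bar> \<le> B"
  shows "integrable \<nu> f"
proof -
  interpret prob_space \<nu> using PM_D(1)[OF assms(1)] .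
  show ?thesis
  proof (rule integrable_const_bound[where B=B])
    show "AE x in \<nu>. norm (f x) \<le> B"
      by (rule AE_I2) (simp add: PM_D(3)[OF assms(1)] assms(3))
    show "f \<in> borel_measurable \<nu>" by (rule meas_PM[OF assms(1,2)])
  qed
qed

lemma Lip1_integrable: "f \<in> Lip1 m \<Longrightarrow> \<nu> \<in> PM m \<Longrightarrow> integrable \<nu> f"
  by (rule integrable_PM[OF _ Lip1_measurable Lip1_bound])

lemma integral_const_on:
  fixes h :: "(nat \<Rightarrow> nat) \<Rightarrow> real"
  assumes "\<nu> \<in> PM m" "\<And>y. y \<in> Omega m \<Longrightarrow> h y = a"
  shows "integral\<^sup>L \<nu> h = a"
proof -
  interpret prob_space \<nu> using PM_D(1)[OF assms(1)] .
  have "integral\<^sup>L \<nu> h = integral\<^sup>L \<nu> (\<lambda>_. a)"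
    proof (rule Bochner_Integration.integral_cong[OF refl])
    fix x assume "x \<in> space \<nu>"
    then show "h x = a" using assms(2) PM_D(3)[OF assms(1)] by simp
  qed
  then show ?thesis by (simp add: prob_space)
qed

lemma PM_point: assumes "\<nu> \<in> PM m" obtains c where "c \<in> Omega m"
proof -
  interpret prob_space \<nu> using PM_D(1)[OF assms(1)] .
  show ?thesis using not_empty PM_D(3)[OF assms] that by blast
qed

lemma dMK_bdd:
  assumes \<nu>: "\<nu> \<in> PM m" and \<nu>': "\<nu>' \<in> PM m"
  shows "bdd_above {(\<integral>x. f x \<partial>\<nu>) - (\<integral>x. f x \<partial>\<nu>') | f. f \<in> Lip1 m}"
proof -
  obtain c where c: "c \<in> Omega m" using PM_point[OF \<nu>] by blast
  interpret N: prob_space \<nu> using PM_D(1)[OF \<nu>] .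
  interpret N': prob_space \<nu>' using PM_D(1)[OF \<nu>'] .
  have "(\<integral>x. f x \<partial>\<nu>) - (\<integral>x. f x \<partial>\<nu>') \<le> 2" if f: "f \<in> Lip1 m" for f
  proof -
    have b: "\<bar>f x - f c\<bar> \<le> 1" if "x \<in> Omega m" for x
    proof -
      have "\<bar>f x - f c\<bar> \<le> dOmega x c" using f that c by (simp add: Lip1_def)
      then show ?thesis using dOmega_le1[of x c] by linarith
    qed
    have ub: "f x \<le> f c + 1" "f c - 1 \<le> f x" if "x \<in> Omega m" for x
      using b[OF that] by linarith+
    have "(\<integral>x. f x \<partial>\<nu>) \<le> f c + 1"
      by (intro N.integral_le_const Lip1_integrable[OF f \<nu>] AE_I2)
        (simp add: PM_D[OF \<nu>] ub)
    moreover have "f c - 1 \<le> (\<integral>x. f x \<partial>\<nu>')"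
      by (intro N'.integral_ge_const Lip1_integrable[OF f \<nu>'] AE_I2)
        (simp add: PM_D[OF \<nu>'] ub)
    ultimately show ?thesis by linarith
  qed
  then show ?thesis by (auto simp: bdd_above_def)
qed

lemma dMK_upper:
  assumes "\<nu> \<in> PM m" "\<nu>' \<in> PM m" "f \<in> Lip1 m"
  shows "(\<integral>x. f x \<partial>\<nu>) - (\<integral>x. f x \<partial>\<nu>') \<le> dMK m \<nu> \<nu>'"
  unfolding dMK_def by (rule cSup_upper[OF _ dMK_bdd[OF assms(1,2)]]) (use assms(3) in blast)

lemma zero_Lip1: "(\<lambda>_. 0) \<in> Lip1 m"
  by (simp add: Lip1_def dOmega_nonneg)

lemma dOmega_zero: assumes "dOmega x y \<le> 0" shows "x = y"
proof (rule ccontr)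
  assume "x \<noteq> y"
  then have "dOmega x y > 0" by (simp add: dOmega_def)
  with assms show False by simp
qed

lemma Lip_s:
  fixes h :: "(nat \<Rightarrow> nat) \<Rightarrow> real"
  assumes \<nu>: "\<nu> \<in> PM m" and \<nu>': "\<nu>' \<in> PM m" and hm: "h \<in> borel_measurable (OmegaM m)"
    and hl: "\<forall>y\<in>Omega m. \<forall>y'\<in>Omega m. \<bar>h y - h y'\<bar> \<le> s * dOmega y y'"
  shows "(\<integral>x. h x \<partial>\<nu>) - (\<integral>x. h x \<partial>\<nu>') \<le> s * dMK m \<nu> \<nu>'"
proof (cases "s > 0")
  case True
  have "(\<lambda>y. h y / s) \<in> Lip1 m"
    unfolding Lip1_def
  proof safe
    fix x y assume "x \<in> Omega m" "y \<in> Omega m"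
    then have "\<bar>h x - h y\<bar> \<le> s * dOmega x y" using hl by blast
    moreover have "\<bar>h x / s - h y / s\<bar> = \<bar>h x - h y\<bar> / s"
      using True by (simp add: diff_divide_distrib[symmetric])
    ultimately show "\<bar>h x / s - h y / s\<bar> \<le> dOmega x y"
      using True by (simp add: divide_le_eq mult.commute)
  qed
  from dMK_upper[OF \<nu> \<nu>' this]
  have "((\<integral>x. h x \<partial>\<nu>) - (\<integral>x. h x \<partial>\<nu>')) / s \<le> dMK m \<nu> \<nu>'"
    by (simp add: diff_divide_distrib)
  then show ?thesis using True by (simp add: divide_le_eq mult.commute)
next
  case False
  obtain c where c: "c \<in> Omega m" using PM_point[OF \<nu>] by blast
  have hc: "h y = h c" if "y \<in> Omega m" for y
  proof -
    have "\<bar>h y - h c\<bar> \<le> s * dOmega y c" using hl that c by blast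
    also have "\<dots> \<le> 0" using False dOmega_nonneg[of y c] by (simp add: mult_nonpos_nonneg)
    finally show ?thesis by simp
  qed
  have "(\<integral>x. h x \<partial>\<nu>) - (\<integral>x. h x \<partial>\<nu>') = 0"
    using integral_const_on[OF \<nu> hc] integral_const_on[OF \<nu>' hc] by simp
  moreover have "0 \<le> s * dMK m \<nu> \<nu>'"
  proof (cases "s = 0")
    case True then show ?thesis by simp
  next
    case False
    with \<open>\<not> s > 0\<close> have s: "s < 0" by simp
    have single: "y = c" if "y \<in> Omega m" for y
    proof -
      have "0 \<le> \<bar>h y - h c\<bar>" by simp
      also have "\<dots> \<le> s * dOmega y c" using hl that c by blast
      finally have "dOmega y c \<le> 0" using s by (simp add: zero_le_mult_iff)
      then show ?thesis by (rule dOmega_zero)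
    qed
    have "dMK m \<nu> \<nu>' \<le> 0"
      unfolding dMK_def
    proof (rule cSup_least)
      show "{(\<integral>x. f x \<partial>\<nu>) - (\<integral>x. f x \<partial>\<nu>') | f. f \<in> Lip1 m} \<noteq> {}"
        using zero_Lip1 by blast
    next
      fix z assume "z \<in> {(\<integral>x. f x \<partial>\<nu>) - (\<integral>x. f x \<partial>\<nu>') | f. f \<in> Lip1 m}"
      then obtain f where z: "z = (\<integral>x. f x \<partial>\<nu>) - (\<integral>x. f x \<partial>\<nu>')" by blast
      have "\<And>y. y \<in> Omega m \<Longrightarrow> f y = f c" using single by blast
      then show "z \<le> 0" using z integral_const_on[OF \<nu>] integral_const_on[OF \<nu>'] by simp
    qed
    then show ?thesis using s by (simp add: mult_nonpos_nonpos)
  qed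
  ultimately show ?thesis by simp
qed


theorem lemma3p1:
  fixes m :: nat and s :: real
    and R :: "(nat \<Rightarrow> nat) \<Rightarrow> (nat \<Rightarrow> nat) \<Rightarrow> (nat \<Rightarrow> nat)"
    and \<eta> \<mu> \<mu>' :: "(nat \<Rightarrow> nat) measure"
  assumes R_into: "\<forall>x\<in>Omega m. \<forall>y\<in>Omega m. R x y \<in> Omega m"
    and R_cont: "\<forall>x\<in>Omega m. \<forall>y\<in>Omega m. \<forall>e>0. \<exists>\<delta>>0. \<forall>x'\<in>Omega m. \<forall>y'\<in>Omega m.
                   dOmega x x' < \<delta> \<and> dOmega y y' < \<delta> \<longrightarrow> dOmega (R x y) (R x' y') < e"
    and R_lip: "\<forall>x\<in>Omega m. \<forall>y\<in>Omega m. \<forall>y'\<in>Omega m.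
                   dOmega (R x y) (R x y') \<le> s * dOmega y y'"
    and \<eta>: "\<eta> \<in> PM m" and \<mu>: "\<mu> \<in> PM m" and \<mu>': "\<mu>' \<in> PM m"
  shows "dMK m (conv m R \<eta> \<mu>) (conv m R \<eta> \<mu>') \<le> s * dMK m \<mu> \<mu>'"
proof -
  let ?M = "OmegaM m"
  have Rm0: "(\<lambda>(x, y). R x y) \<in> measurable (?M \<Otimes>\<^sub>M ?M) ?M"
    by (rule R_measurable[OF R_into R_cont])
  have Rm: "(\<lambda>(x, y). R x y) \<in> measurable (\<eta> \<Otimes>\<^sub>M N) ?M" if N: "sets N = sets ?M" for N
    by (subst measurable_cong_sets[OF sets_pair_measure_cong[OF PM_D(2)[OF \<eta>] N] refl]) (rule Rm0)
  interpret E: prob_space \<eta> using PM_D(1)[OF \<eta>] .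
  have spE: "space \<eta> = Omega m" by (rule PM_D(3)[OF \<eta>])
  {
    fix f assume f: "f \<in> Lip1 m"
    have fm: "f \<in> borel_measurable ?M" by (rule Lip1_measurable[OF f])
    define g where "g y = (\<integral>x. f (R x y) \<partial>\<eta>)" for y
    have fR: "(\<lambda>(x, y). f (R x y)) = (\<lambda>z. f ((\<lambda>(x, y). R x y) z))" by (auto simp: fun_eq_iff)
    have fRm: "(\<lambda>(x, y). f (R x y)) \<in> borel_measurable (\<eta> \<Otimes>\<^sub>M N)" if N: "sets N = sets ?M" for N
      unfolding fR by (rule measurable_compose[OF Rm[OF N] fm])
    have gm: "g \<in> borel_measurable ?M"
    proof -
      have "(\<lambda>(y, x). f (R x y)) \<in> borel_measurable (?M \<Otimes>\<^sub>M \<eta>)"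
        using measurable_pair_swap_iff[of "\<lambda>(y, x). f (R x y)" ?M \<eta> borel] fRm[OF refl] by simp
      then show ?thesis unfolding g_def by (rule E.borel_measurable_lebesgue_integral)
    qed
    have fRx_int: "integrable \<eta> (\<lambda>x. f (R x y))" if y: "y \<in> Omega m" for y
    proof (rule integrable_PM[OF \<eta>])
      show "(\<lambda>x. f (R x y)) \<in> borel_measurable ?M"
      proof (rule cont_measurable, safe)
        fix x and e :: real assume x: "x \<in> Omega m" and e: "0 < e"
        obtain d where d: "d > 0" "\<forall>x'\<in>Omega m. \<forall>y'\<in>Omega m.
                   dOmega x x' < d \<and> dOmega y y' < d \<longrightarrow> dOmega (R x y) (R x' y') < e"
          using R_cont x y e by blast
        show "\<exists>\<delta>>0. \<forall>x'\<in>Omega m. dOmega x x' < \<delta> \<longrightarrow> \<bar>f (R x y) - f (R x' y)\<bar> < e"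
        proof (intro exI[of _ d] conjI ballI impI)
          fix x' assume x': "x' \<in> Omega m" "dOmega x x' < d"
          have "dOmega y y < d" using d(1) by (simp add: dOmega_def)
          then have "dOmega (R x y) (R x' y) < e" using d(2) x' y by blast
          moreover have "\<bar>f (R x y) - f (R x' y)\<bar> \<le> dOmega (R x y) (R x' y)"
            using f R_into x x'(1) y by (simp add: Lip1_def)
          ultimately show "\<bar>f (R x y) - f (R x' y)\<bar> < e" by linarith
        qed (rule d(1))
      qed
    next
      fix x assume "x \<in> Omega m"
      then show "\<bar>f (R x y)\<bar> \<le> \<bar>f (\<lambda>_. 1)\<bar> + 1" using Lip1_bound[OF f] R_into y by blast
    qed
    have gl: "\<forall>y\<in>Omega m. \<forall>y'\<in>Omega m. \<bar>g y - g y'\<bar> \<le> s * dOmega y y'"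
    proof safe
      fix y y' assume y: "y \<in> Omega m" and y': "y' \<in> Omega m"
      have eq: "g y - g y' = (\<integral>x. f (R x y) - f (R x y') \<partial>\<eta>)"
        unfolding g_def using fRx_int[OF y] fRx_int[OF y'] by (rule Bochner_Integration.integral_diff[symmetric])
      have b: "\<bar>f (R x y) - f (R x y')\<bar> \<le> s * dOmega y y'" if x: "x \<in> Omega m" for x
      proof -
        have "\<bar>f (R x y) - f (R x y')\<bar> \<le> dOmega (R x y) (R x y')"
          using f R_into x y y' by (simp add: Lip1_def)
        also have "\<dots> \<le> s * dOmega y y'" using R_lip x y y' by blast
        finally show ?thesis .
      qed
      have i: "integrable \<eta> (\<lambda>x. f (R x y) - f (R x y'))"
        using fRx_int[OF y] fRx_int[OF y'] by (rule Bochner_Integration.integrable_diff)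
      have b2: "f (R x y) - f (R x y') \<le> s * dOmega y y'" "- (s * dOmega y y') \<le> f (R x y) - f (R x y')"
        if "x \<in> Omega m" for x using b[OF that] by linarith+
      have "(\<integral>x. f (R x y) - f (R x y') \<partial>\<eta>) \<le> s * dOmega y y'"
        by (intro E.integral_le_const[OF i] AE_I2) (simp add: spE b2)
      moreover have "- (s * dOmega y y') \<le> (\<integral>x. f (R x y) - f (R x y') \<partial>\<eta>)"
        by (intro E.integral_ge_const[OF i] AE_I2) (simp add: spE b2)
      ultimately show "\<bar>g y - g y'\<bar> \<le> s * dOmega y y'" unfolding eq by linarith
    qed
    have conv_int: "(\<integral>z. f z \<partial>conv m R \<eta> \<nu>) = (\<integral>y. g y \<partial>\<nu>)" if \<nu>: "\<nu> \<in> PM m" for \<nu>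
    proof -
      interpret N: prob_space \<nu> using PM_D(1)[OF \<nu>] .
      interpret P: pair_sigma_finite \<eta> \<nu>
        using prob_space_imp_sigma_finite[OF PM_D(1)[OF \<eta>]] prob_space_imp_sigma_finite[OF PM_D(1)[OF \<nu>]] by (simp add: pair_sigma_finite_def)
      have pp: "prob_space (\<eta> \<Otimes>\<^sub>M \<nu>)" by (rule prob_space_pair[OF PM_D(1)[OF \<eta>] PM_D(1)[OF \<nu>]])
      have int: "integrable (\<eta> \<Otimes>\<^sub>M \<nu>) (\<lambda>(x, y). f (R x y))"
      proof (rule finite_measure.integrable_const_bound[OF prob_space.finite_measure[OF pp], where B="\<bar>f (\<lambda>_. 1)\<bar> + 1"])
        show "(\<lambda>(x, y). f (R x y)) \<in> borel_measurable (\<eta> \<Otimes>\<^sub>M \<nu>)" by (rule fRm[OF PM_D(2)[OF \<nu>]])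
        show "AE z in \<eta> \<Otimes>\<^sub>M \<nu>. norm ((\<lambda>(x, y). f (R x y)) z) \<le> \<bar>f (\<lambda>_. 1)\<bar> + 1"
        proof (rule AE_I2)
          fix z assume "z \<in> space (\<eta> \<Otimes>\<^sub>M \<nu>)"
          then obtain x y where z: "z = (x, y)" "x \<in> Omega m" "y \<in> Omega m"
            by (auto simp: space_pair_measure spE PM_D(3)[OF \<nu>])
          then show "norm ((\<lambda>(x, y). f (R x y)) z) \<le> \<bar>f (\<lambda>_. 1)\<bar> + 1"
            using Lip1_bound[OF f] R_into by simp
        qed
      qed
      have "(\<integral>z. f z \<partial>conv m R \<eta> \<nu>) = (\<integral>z. f ((\<lambda>(x, y). R x y) z) \<partial>(\<eta> \<Otimes>\<^sub>M \<nu>))"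
        unfolding conv_def by (rule integral_distr[OF Rm[OF PM_D(2)[OF \<nu>]] fm])
      also have "\<dots> = (\<integral>z. (\<lambda>(x, y). f (R x y)) z \<partial>(\<eta> \<Otimes>\<^sub>M \<nu>))" unfolding fR ..
      also have "\<dots> = (\<integral>y. (\<integral>x. f (R x y) \<partial>\<eta>) \<partial>\<nu>)"
        using P.integral_snd[of "\<lambda>x y. f (R x y)", OF int] by simp
      finally show ?thesis unfolding g_def .
    qed
    have "(\<integral>z. f z \<partial>conv m R \<eta> \<mu>) - (\<integral>z. f z \<partial>conv m R \<eta> \<mu>') \<le> s * dMK m \<mu> \<mu>'"
      unfolding conv_int[OF \<mu>] conv_int[OF \<mu>'] by (rule Lip_s[OF \<mu> \<mu>' gm gl])
  }
  note main = this
  show ?thesis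
    unfolding dMK_def[of m "conv m R \<eta> \<mu>"]
  proof (rule cSup_least)
    show "{(\<integral>x. f x \<partial>conv m R \<eta> \<mu>) - (\<integral>x. f x \<partial>conv m R \<eta> \<mu>') | f. f \<in> Lip1 m} \<noteq> {}"
      using zero_Lip1 by blast
  next
    fix z assume "z \<in> {(\<integral>x. f x \<partial>conv m R \<eta> \<mu>) - (\<integral>x. f x \<partial>conv m R \<eta> \<mu>') | f. f \<in> Lip1 m}"
    then show "z \<le> s * dMK m \<mu> \<mu>'" using main by blast
  qed
qed

end
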